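(* Let $1\le p\le 2$ and let $p'$ be the conjugate exponent, $1/p+1/p'=1$. Fix $N\ge 1$. Suppose that for every complex block matrix $S=\begin{pmatrix} S_1 & \cdots & S_N\\ R_1&\cdots&R_N\end{pmatrix}$ partitioned into $2\times N$ blocks one has $\|S\|_p\ge \|\mathcal C_p(S)\|_p$. Then for every complex block matrix $T=\begin{pmatrix} A_1 & \cdots & A_N\\ B_1&\cdots&B_N\end{pmatrix}$ partitioned into $2\times N$ blocks one has $\|T\|_{p'}\le \|\mathcal C_{p'}(T)\|_{p'}$.
   Context: For a matrix $X$ and $r\ge1$, $\|X\|_r=(\operatorname{Tr}|X|^r)^{1/r}$ is the Schatten $r$-norm, $|X|=(X^*X)^{1/2}$. A $2\times N$ partitioned block matrix has blocks $A_k$ (first block row) and $B_k$ (second block row), where all blocks in a block row have the same number of rows and all blocks in a block column have the same number of columns. Its Schatten $r$-norm compression is the $2\times N$ real matrix $\mathcal C_r(T)=\begin{pmatrix} \|A_1\|_r & \cdots & \|A_N\|_r\\ \|B_1\|_r&\cdots&\|B_N\|_r\end{pmatrix}$. *)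

theory Defs
  imports "Jordan_Normal_Form.Char_Poly" "HOL-Library.Extended_Real"
begin

definition adj :: "complex mat \<Rightarrow> complex mat" where
  "adj X = mat (dim_col X) (dim_row X) (\<lambda>(i,j). cnj (X $$ (j,i)))"

definition sq_sing_vals :: "complex mat \<Rightarrow> complex multiset" where
  "sq_sing_vals X = proots (char_poly (adj X * X))"

definition schatten :: "ereal \<Rightarrow> complex mat \<Rightarrow> real" where
  "schatten r X = (case r of
       ereal s \<Rightarrow> (\<Sum>\<^sub># (image_mset (\<lambda>e. sqrt (Re e) powr s) (sq_sing_vals X))) powr (1 / s)
     | PInfty \<Rightarrow> Max (insert 0 ((\<lambda>e. sqrt (Re e)) ` set_mset (sq_sing_vals X)))
     | MInfty \<Rightarrow> 0)"

definition offs :: "(nat \<Rightarrow> nat) \<Rightarrow> nat \<Rightarrow> nat" where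
  "offs w k = (\<Sum>i<k. w i)"

definition blk :: "complex mat \<Rightarrow> nat \<Rightarrow> nat \<Rightarrow> nat \<Rightarrow> nat \<Rightarrow> complex mat" where
  "blk X r0 h c0 c = mat h c (\<lambda>(i,j). X $$ (r0 + i, c0 + j))"

text \<open>A (m1+m2) x (sum of widths) matrix viewed as a 2 x N block matrix with block row
  heights m1, m2 and block column widths w 0, ..., w (N-1). Block (0,k) is A_k,
  block (1,k) is B_k.\<close>
definition block2 :: "complex mat \<Rightarrow> nat \<Rightarrow> nat \<Rightarrow> (nat \<Rightarrow> nat) \<Rightarrow> nat \<Rightarrow> nat \<Rightarrow> complex mat" where
  "block2 X m1 m2 w i k =
     (if i = 0 then blk X 0 m1 (offs w k) (w k) else blk X m1 m2 (offs w k) (w k))"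

text \<open>Schatten r-norm compression: the 2 x N real matrix of block norms
  (embedded into complex matrices so that its Schatten norm can be taken).\<close>
definition compr :: "ereal \<Rightarrow> nat \<Rightarrow> complex mat \<Rightarrow> nat \<Rightarrow> nat \<Rightarrow> (nat \<Rightarrow> nat) \<Rightarrow> complex mat" where
  "compr r N X m1 m2 w =
     mat 2 N (\<lambda>(i,k). complex_of_real (schatten r (block2 X m1 m2 w i k)))"

definition is_block2 :: "nat \<Rightarrow> complex mat \<Rightarrow> nat \<Rightarrow> nat \<Rightarrow> (nat \<Rightarrow> nat) \<Rightarrow> bool" where
  "is_block2 N X m1 m2 w \<longleftrightarrow> m1 \<ge> 1 \<and> m2 \<ge> 1 \<and> (\<forall>k<N. w k \<ge> 1) \<and>
     dim_row X = m1 + m2 \<and> dim_col X = (\<Sum>k<N. w k)"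

end

theory Submission
  imports Defs
begin

lemma adj_carrier[simp]: "adj X \<in> carrier_mat (dim_col X) (dim_row X)"
  by (simp add: adj_def)
lemma dim_adj[simp]: "dim_row (adj X) = dim_col X" "dim_col (adj X) = dim_row X"
  by (simp_all add: adj_def)
lemma index_adj[simp]: "i < dim_col X \<Longrightarrow> j < dim_row X \<Longrightarrow> adj X $$ (i,j) = cnj (X $$ (j,i))"
  by (simp add: adj_def)
lemma adj_carrierI: "X \<in> carrier_mat m n \<Longrightarrow> adj X \<in> carrier_mat n m"
  unfolding carrier_mat_def by simp
lemma adj_adj[simp]: "adj (adj X) = X"
proof (rule eq_matI)
  fix i j assume "i < dim_row X" "j < dim_col X"
  then show "adj (adj X) $$ (i, j) = X $$ (i, j)" by simp
qed simp_all

lemma mult_entry: "A \<in> carrier_mat m k \<Longrightarrow> B \<in> carrier_mat k n \<Longrightarrow> i < m \<Longrightarrow> j < n \<Longrightarrow>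
   (A * B) $$ (i,j) = (\<Sum>c<k. A $$ (i,c) * B $$ (c,j))"
  unfolding carrier_mat_def by (auto simp: index_mult_mat scalar_prod_def atLeast0LessThan)

lemma adj_mult: assumes A: "A \<in> carrier_mat m k" and B: "B \<in> carrier_mat k n"
  shows "adj (A * B) = adj B * adj A"
proof (rule eq_matI)
  have aA: "adj A \<in> carrier_mat k m" and aB: "adj B \<in> carrier_mat n k" using A B by (auto intro: adj_carrierI)
  fix i j assume ij: "i < dim_row (adj B * adj A)" "j < dim_col (adj B * adj A)"
  then have i: "i < n" and j: "j < m" using aA aB by auto
  have AB: "A * B \<in> carrier_mat m n" using A B by auto
  have "adj (A * B) $$ (i,j) = cnj ((A*B) $$ (j,i))" using A B i j by (simp add: index_adj)
  also have "\<dots> = (\<Sum>c<k. cnj (A $$ (j,c)) * cnj (B $$ (c,i)))"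
    using mult_entry[OF A B j i] by (simp add: cnj_sum)
  also have "\<dots> = (\<Sum>c<k. adj B $$ (i,c) * adj A $$ (c,j))"
    using A B i j by (intro sum.cong refl) (simp add: mult.commute)
  also have "\<dots> = (adj B * adj A) $$ (i,j)"
    using mult_entry[OF aB aA i j] by simp
  finally show "adj (A * B) $$ (i,j) = (adj B * adj A) $$ (i,j)" .
next
  show "dim_row (adj (A * B)) = dim_row (adj B * adj A)" by simp
  show "dim_col (adj (A * B)) = dim_col (adj B * adj A)" by simp
qed
definition unitaryM :: "nat \<Rightarrow> complex mat \<Rightarrow> bool" where
  "unitaryM n U \<longleftrightarrow> U \<in> carrier_mat n n \<and> adj U * U = 1\<^sub>m n \<and> U * adj U = 1\<^sub>m n"

lemma unitaryI1: assumes "U \<in> carrier_mat n n" "adj U * U = 1\<^sub>m n" shows "unitaryM n U"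
  using assms mat_mult_left_right_inverse[of "adj U" n U] unfolding unitaryM_def
  by (auto intro: adj_carrierI)

lemma unitary_mult: assumes "unitaryM n U" "unitaryM n V" shows "unitaryM n (U * V)"
proof (rule unitaryI1)
  have U: "U \<in> carrier_mat n n" and V: "V \<in> carrier_mat n n" and
    UU: "adj U * U = 1\<^sub>m n" and VV: "adj V * V = 1\<^sub>m n"
    using assms unfolding unitaryM_def by auto
  have aU: "adj U \<in> carrier_mat n n" and aV: "adj V \<in> carrier_mat n n" using U V by (auto intro: adj_carrierI)
  show "U * V \<in> carrier_mat n n" using U V by auto
  have "adj (U * V) * (U * V) = adj V * adj U * (U * V)" using adj_mult[OF U V] by simp
  also have "\<dots> = adj V * (adj U * U) * V"
    using U V aU aV by (simp add: assoc_mult_mat[of _ n n _ n _ n])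
  also have "\<dots> = 1\<^sub>m n" using UU VV V aV by simp
  finally show "adj (U * V) * (U * V) = 1\<^sub>m n" .
qed

lemma unitary_cols: assumes "unitaryM n U" "i < n" "j < n"
  shows "(\<Sum>a<n. cnj (U $$ (a,i)) * U $$ (a,j)) = (if i = j then 1 else 0)"
proof -
  have U: "U \<in> carrier_mat n n" using assms unfolding unitaryM_def by auto
  have "(adj U * U) $$ (i,j) = (\<Sum>a<n. cnj (U $$ (a,i)) * U $$ (a,j))"
    using U assms by (subst mult_entry[of _ n n _ n], auto intro: adj_carrierI)
  then show ?thesis using assms unfolding unitaryM_def by auto
qed

lemma unitary_rows: assumes "unitaryM n U" "a < n" "b < n"
  shows "(\<Sum>i<n. U $$ (a,i) * cnj (U $$ (b,i))) = (if a = b then 1 else 0)"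
proof -
  have U: "U \<in> carrier_mat n n" using assms unfolding unitaryM_def by auto
  have "(U * adj U) $$ (a,b) = (\<Sum>i<n. U $$ (a,i) * cnj (U $$ (b,i)))"
    using U assms by (subst mult_entry[of _ n n _ n], auto intro: adj_carrierI)
  then show ?thesis using assms unfolding unitaryM_def by auto
qed

lemma triple_entry: assumes "U \<in> carrier_mat k n1" "A \<in> carrier_mat k l" "V \<in> carrier_mat l n2"
  "i < n1" "j < n2"
  shows "(adj U * A * V) $$ (i,j) = (\<Sum>a<k. \<Sum>b<l. cnj (U $$ (a,i)) * A $$ (a,b) * V $$ (b,j))"
proof -
  have aU: "adj U \<in> carrier_mat n1 k" using assms by (auto intro: adj_carrierI)
  have "(adj U * A * V) $$ (i,j) = (\<Sum>b<l. (adj U * A) $$ (i,b) * V $$ (b,j))"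
    using assms aU by (intro mult_entry[of _ n1 l _ n2], auto)
  also have "\<dots> = (\<Sum>b<l. (\<Sum>a<k. cnj (U $$ (a,i)) * A $$ (a,b)) * V $$ (b,j))"
    using assms aU by (intro sum.cong refl, subst mult_entry[of _ n1 k _ l], auto)
  also have "\<dots> = (\<Sum>a<k. \<Sum>b<l. cnj (U $$ (a,i)) * A $$ (a,b) * V $$ (b,j))"
    by (simp add: sum_distrib_right, subst sum.swap, rule refl)
  finally show ?thesis .
qed

lemma sum_delta1: "(a::nat) < m \<Longrightarrow> (\<Sum>b<m. (if a = b then 1 else 0) * f b) = (f a :: 'a::comm_ring_1)"
proof -
  assume a: "a < m"
  have "(\<Sum>b<m. (if a = b then 1 else 0) * f b) = (\<Sum>b<m. if a = b then f b else 0)"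
    by (intro sum.cong) auto
  then show ?thesis using a by (simp add: sum.delta sum.delta')
qed
lemma sum_delta2: "(a::nat) < m \<Longrightarrow> (\<Sum>b<m. f b * (if b = a then 1 else 0)) = (f a :: 'a::comm_ring_1)"
proof -
  assume a: "a < m"
  have "(\<Sum>b<m. f b * (if b = a then 1 else 0)) = (\<Sum>b<m. if a = b then f b else 0)"
    by (intro sum.cong) auto
  then show ?thesis using a by (simp add: sum.delta sum.delta')
qed

lemma householder: fixes u :: "nat \<Rightarrow> complex"
  assumes m: "0 < m" and u1: "(\<Sum>a<m. u a * cnj (u a)) = 1"
  shows "\<exists>W c. unitaryM m W \<and> (\<forall>a<m. W $$ (a,0) = c * u a)"
proof -
  define r where "r = cmod (u 0)"
  define \<alpha> where "\<alpha> = (if u 0 = 0 then 1 else u 0 / complex_of_real r)"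
  have \<alpha>1: "cnj \<alpha> * \<alpha> = 1"
  proof (cases "u 0 = 0")
    case False
    then have "r \<noteq> 0" unfolding r_def by simp
    then have "cnj \<alpha> * \<alpha> = u 0 * cnj (u 0) / complex_of_real (r^2)"
      using False unfolding \<alpha>_def by (simp add: power2_eq_square)
    also have "\<dots> = 1" using False unfolding r_def by (simp add: complex_norm_square[symmetric])
    finally show ?thesis .
  qed (simp add: \<alpha>_def)
  have \<alpha>u: "cnj \<alpha> * u 0 = complex_of_real r"
  proof (cases "u 0 = 0")
    case False
    then have "r \<noteq> 0" unfolding r_def by simp
    then have "cnj \<alpha> * u 0 = u 0 * cnj (u 0) / complex_of_real r"
      using False unfolding \<alpha>_def by (simp add: mult.commute)
    also have "\<dots> = complex_of_real (r^2) / complex_of_real r"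
      unfolding r_def by (simp add: complex_norm_square[symmetric])
    also have "\<dots> = complex_of_real r" using \<open>r \<noteq> 0\<close> by (simp add: power2_eq_square)
    finally show ?thesis .
  qed (simp add: \<alpha>_def r_def)
  have \<alpha>u': "\<alpha> * cnj (u 0) = complex_of_real r"
    using arg_cong[OF \<alpha>u, of cnj] by (simp add: mult.commute)
  define z where "z a = u a - (if a = 0 then \<alpha> else 0)" for a
  define N where "N = (\<Sum>a<m. z a * cnj (z a))"
  define W where "W = mat m m (\<lambda>(a,b). (if a = b then 1 else 0) - 2 * z a * cnj (z b) / N)"
  have W: "W \<in> carrier_mat m m" unfolding W_def by simp
  have NR: "N = complex_of_real (\<Sum>a<m. (cmod (z a))^2)"
    unfolding N_def of_real_sum by (simp only: complex_norm_square)
  have cN: "cnj N = N" unfolding NR by simp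
  have adjW: "adj W = W"
    by (rule eq_matI) (auto simp: W_def cN mult.commute)
  have zsum: "(\<Sum>b<m. cnj (z b) * z b) = N" unfolding N_def by (simp add: mult.commute)
  have WW: "W * W = 1\<^sub>m m"
  proof (rule eq_matI)
    fix a c assume "a < dim_row (1\<^sub>m m)" "c < dim_col (1\<^sub>m m)"
    then have a: "a < m" and c: "c < m" by auto
    let ?d = "\<lambda>a b. (if a = b then 1 else 0 :: complex)"
    let ?x = "\<lambda>a b. 2 * z a * cnj (z b) / N"
    have "(W * W) $$ (a,c) = (\<Sum>b<m. (?d a b - ?x a b) * (?d b c - ?x b c))"
      using a c W by (subst mult_entry[OF W W], auto simp: W_def)
    also have "\<dots> = (\<Sum>b<m. ?d a b * ?d b c) - (\<Sum>b<m. ?d a b * ?x b c) - (\<Sum>b<m. ?x a b * ?d b c)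
        + (\<Sum>b<m. ?x a b * ?x b c)"
      by (simp add: algebra_simps sum.distrib sum_subtractf)
    also have "(\<Sum>b<m. ?d a b * ?d b c) = ?d a c" using sum_delta1[OF a, of "\<lambda>b. ?d b c"] by simp
    also have "(\<Sum>b<m. ?d a b * ?x b c) = ?x a c" using sum_delta1[OF a, of "\<lambda>b. ?x b c"] by simp
    also have "(\<Sum>b<m. ?x a b * ?d b c) = ?x a c" using sum_delta2[OF c, of "\<lambda>b. ?x a b"] by simp
    also have "(\<Sum>b<m. ?x a b * ?x b c) = 4 * z a * cnj (z c) * (\<Sum>b<m. cnj (z b) * z b) / (N * N)"
      by (simp add: sum_distrib_left sum_divide_distrib algebra_simps)
    also have "\<dots> = 2 * ?x a c" unfolding zsum
      by (cases "N = 0") (simp_all add: field_simps)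
    finally show "(W * W) $$ (a,c) = 1\<^sub>m m $$ (a,c)" using a c by simp
  qed (use W in auto)
  have unit: "unitaryM m W" using unitaryI1[OF W] WW adjW by simp
  have Nval: "N = 2 - 2 * complex_of_real r"
  proof -
    have t: "z a * cnj (z a) = u a * cnj (u a) - (if a = 0 then \<alpha> * cnj (u 0) + cnj \<alpha> * u 0 - \<alpha> * cnj \<alpha> else 0)" for a
      unfolding z_def by (cases "a = 0") (simp_all add: algebra_simps)
    have "N = (\<Sum>a<m. u a * cnj (u a)) - (\<Sum>a<m. (if a = 0 then \<alpha> * cnj (u 0) + cnj \<alpha> * u 0 - \<alpha> * cnj \<alpha> else 0))"
      unfolding N_def t by (simp only: sum_subtractf)
    also have "\<dots> = 1 - (\<alpha> * cnj (u 0) + cnj \<alpha> * u 0 - \<alpha> * cnj \<alpha>)"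
      using m u1 by simp
    also have "\<dots> = 2 - 2 * complex_of_real r" using \<alpha>u \<alpha>u' \<alpha>1 by (simp add: mult.commute)
    finally show ?thesis .
  qed
  have col0: "W $$ (a,0) = cnj \<alpha> * u a" if a: "a < m" for a
  proof (cases "N = 0")
    case True
    then have "(\<Sum>a<m. (cmod (z a))^2) = 0" unfolding NR by (simp only: of_real_eq_0_iff)
    then have "\<forall>a\<in>{..<m}. (cmod (z a))^2 = 0" by (subst sum_nonneg_eq_0_iff[symmetric]) auto
    then have "z a = 0" using a by simp
    then have "u a = (if a = 0 then \<alpha> else 0)" unfolding z_def by simp
    then show ?thesis using True a m \<alpha>1 by (simp add: W_def)
  next
    case False
    have r1: "complex_of_real r \<noteq> 1" using False Nval by auto
    have "cnj (u 0) = (cnj \<alpha> * \<alpha>) * cnj (u 0)" using \<alpha>1 by simp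
    also have "\<dots> = cnj \<alpha> * complex_of_real r" using \<alpha>u' by (simp add: mult.assoc)
    finally have cu0: "cnj (u 0) = cnj \<alpha> * complex_of_real r" .
    have cz0: "cnj (z 0) = cnj \<alpha> * (complex_of_real r - 1)"
      unfolding z_def using cu0 by (simp add: algebra_simps)
    have "W $$ (a,0) = (if a = 0 then 1 else 0) - 2 * z a * cnj (z 0) / N" using a m by (simp add: W_def)
    also have "\<dots> = (if a = 0 then 1 else 0) + z a * cnj \<alpha>"
      unfolding cz0 Nval using r1 by (simp add: field_simps)
    also have "\<dots> = cnj \<alpha> * u a" unfolding z_def using \<alpha>1 by (simp add: algebra_simps)
    finally show ?thesis .
  qed
  show ?thesis using unit col0 by blast
qed

lemma unitary_one: "unitaryM n (1\<^sub>m n)"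
  by (rule unitaryI1) (auto intro!: eq_matI)

lemma spectral: "A \<in> carrier_mat n n \<Longrightarrow> adj A = A \<Longrightarrow>
  \<exists>U. unitaryM n U \<and> (\<forall>i<n. \<forall>j<n. i \<noteq> j \<longrightarrow> (adj U * A * U) $$ (i,j) = 0)"
proof (induction n arbitrary: A)
  case 0
  then show ?case using unitary_one by blast
next
  case (Suc n)
  have A: "A \<in> carrier_mat (Suc n) (Suc n)" and hA: "adj A = A" by fact+
  have "degree (char_poly A) = Suc n" using degree_monic_char_poly[OF A] by simp
  then have "\<not> constant (poly (char_poly A))" by (simp add: constant_degree)
  then obtain e where "poly (char_poly A) e = 0" using fundamental_theorem_of_algebra by blast
  then have "eigenvalue A e" using eigenvalue_root_char_poly[OF A] by simp
  then obtain v where ev: "eigenvector A v e" unfolding eigenvalue_def by blast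
  then have v: "v \<in> carrier_vec (Suc n)" and v0: "v \<noteq> 0\<^sub>v (Suc n)" and Av: "A *\<^sub>v v = e \<cdot>\<^sub>v v"
    using A unfolding eigenvector_def by auto
  define nr where "nr = (\<Sum>a<Suc n. (cmod (v $ a))^2)"
  obtain a0 where a0: "a0 < Suc n" "v $ a0 \<noteq> 0" using v v0 by (metis eq_vecI carrier_vecD index_zero_vec)
  have "0 < (cmod (v $ a0))^2" using a0 by simp
  also have "\<dots> \<le> nr" unfolding nr_def using a0 by (intro member_le_sum) auto
  finally have nr0: "0 < nr" .
  define u where "u a = v $ a / complex_of_real (sqrt nr)" for a
  have "(\<Sum>a<Suc n. u a * cnj (u a)) = (\<Sum>a<Suc n. complex_of_real ((cmod (v $ a))^2) / complex_of_real nr)"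
    unfolding u_def using nr0
    by (intro sum.cong refl) (simp add: complex_norm_square[symmetric] power2_eq_square flip: of_real_mult)
  also have "\<dots> = complex_of_real nr / complex_of_real nr" unfolding nr_def
    by (simp only: sum_divide_distrib[symmetric] of_real_sum)
  also have "\<dots> = 1" using nr0 by simp
  finally have u1: "(\<Sum>a<Suc n. u a * cnj (u a)) = 1" .
  obtain W c where W: "unitaryM (Suc n) W" and Wcol: "\<forall>a<Suc n. W $$ (a,0) = c * u a"
    using householder[OF _ u1] by blast
  have Wc: "W \<in> carrier_mat (Suc n) (Suc n)" using W unfolding unitaryM_def by auto
  have aW: "adj W \<in> carrier_mat (Suc n) (Suc n)" using Wc by (rule adj_carrierI)
  have AW0: "(A * W) $$ (a,0) = e * W $$ (a,0)" if a: "a < Suc n" for a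
  proof -
    have "(A * W) $$ (a,0) = (\<Sum>b<Suc n. A $$ (a,b) * (c * u b))"
      using a Wc Wcol by (subst mult_entry[OF A Wc]) (auto intro!: sum.cong)
    also have "\<dots> = c / complex_of_real (sqrt nr) * (\<Sum>b<Suc n. A $$ (a,b) * v $ b)"
      unfolding u_def by (simp add: sum_distrib_left algebra_simps)
    also have "(\<Sum>b<Suc n. A $$ (a,b) * v $ b) = (A *\<^sub>v v) $ a"
      using a A v by (simp add: scalar_prod_def atLeast0LessThan)
    also have "\<dots> = e * v $ a" using Av a v by simp
    finally show ?thesis using Wcol a by (simp add: u_def)
  qed
  define B where "B = adj W * A * W"
  have Bc: "B \<in> carrier_mat (Suc n) (Suc n)" unfolding B_def using aW A Wc by auto
  have hB: "adj B = B"
  proof -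
    have "adj B = adj W * adj (adj W * A)" unfolding B_def
      by (rule adj_mult[of _ "Suc n" "Suc n" _ "Suc n"]) (use aW A Wc in auto)
    also have "adj (adj W * A) = adj A * adj (adj W)"
      by (rule adj_mult[of _ "Suc n" "Suc n" _ "Suc n"]) (use aW A in auto)
    finally show ?thesis using hA aW A Wc by (simp add: B_def assoc_mult_mat[of _ "Suc n" "Suc n" _ "Suc n" _ "Suc n"])
  qed
  have B0: "B $$ (i,0) = 0" if i: "0 < i" "i < Suc n" for i
  proof -
    have "B = adj W * (A * W)" unfolding B_def using aW A Wc by (simp add: assoc_mult_mat)
    moreover have AWc: "A * W \<in> carrier_mat (Suc n) (Suc n)" using A Wc by auto
    ultimately have "B $$ (i,0) = (\<Sum>a<Suc n. adj W $$ (i,a) * (A * W) $$ (a,0))"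
      using mult_entry[OF aW AWc i(2), of 0] by simp
    also have "\<dots> = (\<Sum>a<Suc n. cnj (W $$ (a,i)) * (A * W) $$ (a,0))"
      using i Wc by (intro sum.cong refl) simp
    also have "\<dots> = e * (\<Sum>a<Suc n. cnj (W $$ (a,i)) * W $$ (a,0))"
      by (simp add: AW0 sum_distrib_left algebra_simps)
    also have "\<dots> = 0" using unitary_cols[OF W i(2), of 0] i by simp
    finally show ?thesis .
  qed
  have B0': "B $$ (0,j) = 0" if j: "0 < j" "j < Suc n" for j
  proof -
    have "B $$ (0,j) = adj B $$ (0,j)" using hB by simp
    also have "\<dots> = cnj (B $$ (j,0))" using Bc j by simp
    finally show ?thesis using B0[OF j] by simp
  qed
  define A3 where "A3 = mat n n (\<lambda>(i,j). B $$ (Suc i, Suc j))"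
  have A3c: "A3 \<in> carrier_mat n n" unfolding A3_def by simp
  have hA3: "adj A3 = A3"
  proof (rule eq_matI)
    fix i j assume "i < dim_row A3" "j < dim_col A3"
    then have ij: "i < n" "j < n" unfolding A3_def by auto
    have "adj A3 $$ (i,j) = cnj (B $$ (Suc j, Suc i))" using ij by (simp add: A3_def)
    also have "\<dots> = adj B $$ (Suc i, Suc j)" using ij Bc by simp
    finally show "adj A3 $$ (i,j) = A3 $$ (i,j)" using hB ij by (simp add: A3_def)
  qed (auto simp: A3_def)
  obtain U3 where U3: "unitaryM n U3" and U3d: "\<forall>i<n. \<forall>j<n. i \<noteq> j \<longrightarrow> (adj U3 * A3 * U3) $$ (i,j) = 0"
    using Suc.IH[OF A3c hA3] by blast
  have U3c: "U3 \<in> carrier_mat n n" using U3 unfolding unitaryM_def by auto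
  define M where "M = mat (Suc n) (Suc n) (\<lambda>(i,j). if i = 0 \<and> j = 0 then 1 else if i = 0 \<or> j = 0 then 0 else U3 $$ (i - 1, j - 1))"
  have Mc: "M \<in> carrier_mat (Suc n) (Suc n)" unfolding M_def by simp
  have M00: "M $$ (0,0) = 1" unfolding M_def by simp
  have M0S: "j < n \<Longrightarrow> M $$ (0, Suc j) = 0" for j unfolding M_def by simp
  have MS0: "i < n \<Longrightarrow> M $$ (Suc i, 0) = 0" for i unfolding M_def by simp
  have MSS: "i < n \<Longrightarrow> j < n \<Longrightarrow> M $$ (Suc i, Suc j) = U3 $$ (i, j)" for i j unfolding M_def by simp
  have M: "unitaryM (Suc n) M"
  proof (rule unitaryI1[OF Mc], rule eq_matI)
    fix i j assume "i < dim_row (1\<^sub>m (Suc n))" "j < dim_col (1\<^sub>m (Suc n))"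
    then have ij: "i < Suc n" "j < Suc n" by auto
    have "(adj M * M) $$ (i,j) = (\<Sum>a<Suc n. cnj (M $$ (a,i)) * M $$ (a,j))"
      using ij Mc by (subst mult_entry[of _ "Suc n" "Suc n" _ "Suc n"]) (auto intro: adj_carrierI)
    also have "\<dots> = cnj (M $$ (0,i)) * M $$ (0,j) + (\<Sum>a<n. cnj (M $$ (Suc a,i)) * M $$ (Suc a,j))"
      by (rule sum.lessThan_Suc_shift)
    also have "\<dots> = 1\<^sub>m (Suc n) $$ (i,j)"
    proof (cases i)
      case 0
      then show ?thesis using ij by (cases j) (simp_all add: M00 M0S MS0)
    next
      case (Suc i')
      show ?thesis
      proof (cases j)
        case 0
        then show ?thesis using ij Suc by (simp add: M00 M0S MS0)
      next
        case (Suc j')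
        then show ?thesis using ij \<open>i = Suc i'\<close> unitary_cols[OF U3, of i' j'] by (simp add: M0S MSS)
      qed
    qed
    finally show "(adj M * M) $$ (i,j) = 1\<^sub>m (Suc n) $$ (i,j)" .
  qed (use Mc in auto)
  define U where "U = W * M"
  have U: "unitaryM (Suc n) U" unfolding U_def by (rule unitary_mult[OF W M])
  have aM: "adj M \<in> carrier_mat (Suc n) (Suc n)" using Mc by (rule adj_carrierI)
  have UAU: "adj U * A * U = adj M * B * M"
  proof -
    have "adj U = adj M * adj W" unfolding U_def by (rule adj_mult[OF Wc Mc])
    then show ?thesis unfolding U_def B_def using aM aW A Wc Mc
      by (simp add: assoc_mult_mat[of _ "Suc n" "Suc n" _ "Suc n" _ "Suc n"])
  qed
  have diag: "(adj M * B * M) $$ (i,j) = 0" if ij: "i < Suc n" "j < Suc n" "i \<noteq> j" for i j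
  proof -
    have e: "(adj M * B * M) $$ (i,j) = (\<Sum>a<Suc n. \<Sum>b<Suc n. cnj (M $$ (a,i)) * B $$ (a,b) * M $$ (b,j))"
      by (rule triple_entry[OF Mc Bc Mc ij(1,2)])
    show ?thesis
    proof (cases i)
      case 0
      then obtain j' where j: "j = Suc j'" "j' < n" using ij by (cases j) auto
      have "(adj M * B * M) $$ (i,j) = (\<Sum>b<Suc n. B $$ (0,b) * M $$ (b,j))"
        unfolding e using 0 j by (simp del: sum.lessThan_Suc add: sum.lessThan_Suc_shift M00 MS0)
      also have "\<dots> = 0" using j by (simp del: sum.lessThan_Suc add: sum.lessThan_Suc_shift M0S B0')
      finally show ?thesis .
    next
      case (Suc i')
      note i = this
      show ?thesis
      proof (cases j)
        case 0
        have "(adj M * B * M) $$ (i,j) = (\<Sum>a<Suc n. cnj (M $$ (a,i)) * B $$ (a,0))"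
          unfolding e using 0 ij by (simp del: sum.lessThan_Suc add: sum.lessThan_Suc_shift M00 MS0 M0S)
        also have "\<dots> = 0" using i ij by (simp del: sum.lessThan_Suc add: sum.lessThan_Suc_shift M0S B0)
        finally show ?thesis .
      next
        case (Suc j')
        have "(adj M * B * M) $$ (i,j) = (\<Sum>a<n. \<Sum>b<n. cnj (U3 $$ (a,i')) * A3 $$ (a,b) * U3 $$ (b,j'))"
          unfolding e using Suc i ij by (simp del: sum.lessThan_Suc add: sum.lessThan_Suc_shift M0S MSS A3_def)
        also have "\<dots> = (adj U3 * A3 * U3) $$ (i',j')"
          using i Suc ij by (intro triple_entry[symmetric, OF U3c A3c U3c]) auto
        also have "\<dots> = 0" using U3d i Suc ij by auto
        finally show ?thesis .
      qed
    qed
  qed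
  show ?case using U diag UAU by auto
qed

lemma svd_exists: assumes X: "X \<in> carrier_mat m n"
  shows "\<exists>V. unitaryM n V \<and> (\<forall>i<n. \<forall>j<n. i \<noteq> j \<longrightarrow> (adj (X * V) * (X * V)) $$ (i,j) = 0)"
proof -
  have aX: "adj X \<in> carrier_mat n m" using X by (rule adj_carrierI)
  have Ac: "adj X * X \<in> carrier_mat n n" using aX X by auto
  have hA: "adj (adj X * X) = adj X * X" using adj_mult[OF aX X] by simp
  obtain U where U: "unitaryM n U" and d: "\<forall>i<n. \<forall>j<n. i \<noteq> j \<longrightarrow> (adj U * (adj X * X) * U) $$ (i,j) = 0"
    using spectral[OF Ac hA] by blast
  have Uc: "U \<in> carrier_mat n n" using U unfolding unitaryM_def by auto
  have aU: "adj U \<in> carrier_mat n n" using Uc by (rule adj_carrierI)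
  have "adj (X * U) * (X * U) = adj U * (adj X * X) * U"
    using adj_mult[OF X Uc] aU aX X Uc by (simp add: assoc_mult_mat[of _ n m _ n _ n] assoc_mult_mat[of _ n n _ m _ n] assoc_mult_mat[of _ n m _ m _ n] assoc_mult_mat[of _ n n _ n _ n])
  then show ?thesis using U d by auto
qed

definition colnorm :: "complex mat \<Rightarrow> nat \<Rightarrow> real" where
  "colnorm Y i = sqrt (\<Sum>a<dim_row Y. (cmod (Y $$ (a,i)))^2)"

lemma gram_diag: assumes "Y \<in> carrier_mat m n" "i < n"
  shows "(adj Y * Y) $$ (i,i) = complex_of_real ((colnorm Y i)^2)"
proof -
  have "(adj Y * Y) $$ (i,i) = (\<Sum>a<m. cnj (Y $$ (a,i)) * Y $$ (a,i))"
    using assms by (subst mult_entry[of _ n m _ n]) (auto intro: adj_carrierI)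
  also have "\<dots> = complex_of_real (\<Sum>a<m. (cmod (Y $$ (a,i)))^2)"
    unfolding of_real_sum by (intro sum.cong refl) (simp only: complex_norm_square mult.commute)
  finally show ?thesis using assms unfolding colnorm_def by (simp add: sum_nonneg)
qed

lemma proots_lin: "proots (\<Prod>a\<leftarrow>xs. [:- a, 1:]) = mset (xs :: complex list)"
proof (induction xs)
  case (Cons a xs)
  have nz: "(\<Prod>a\<leftarrow>xs. [:- a, 1:]) \<noteq> 0" by (auto simp: prod_list_zero_iff)
  have "proots (\<Prod>a\<leftarrow>a # xs. [:- a, 1:]) = proots [:- a, 1:] + proots (\<Prod>a\<leftarrow>xs. [:- a, 1:])"
    using nz by (simp only: list.map prod_list.Cons, subst proots_mult) auto
  then show ?case using Cons by simp
qed simp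

lemma sq_sing_vals_from: assumes X: "X \<in> carrier_mat m n" and V: "unitaryM n V"
  and d: "\<forall>i<n. \<forall>j<n. i \<noteq> j \<longrightarrow> (adj (X * V) * (X * V)) $$ (i,j) = 0"
  shows "sq_sing_vals X = mset (map (\<lambda>i. complex_of_real ((colnorm (X * V) i)^2)) [0..<n])"
proof -
  have Vc: "V \<in> carrier_mat n n" using V unfolding unitaryM_def by auto
  have aV: "adj V \<in> carrier_mat n n" using Vc by (rule adj_carrierI)
  have aX: "adj X \<in> carrier_mat n m" using X by (rule adj_carrierI)
  define G where "G = adj (X * V) * (X * V)"
  have XV: "X * V \<in> carrier_mat m n" using X Vc by auto
  have aXV: "adj (X * V) \<in> carrier_mat n m" using XV by (rule adj_carrierI)
  have Gc: "G \<in> carrier_mat n n" unfolding G_def by (rule mult_carrier_mat[OF aXV XV])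
  have G: "G = adj V * (adj X * X) * V"
    unfolding G_def using adj_mult[OF X Vc] aV aX X Vc
    by (simp add: assoc_mult_mat[of _ n m _ n _ n] assoc_mult_mat[of _ n n _ m _ n] assoc_mult_mat[of _ n m _ m _ n] assoc_mult_mat[of _ n n _ n _ n])
  have VV1: "V * adj V = 1\<^sub>m n" and VV2: "adj V * V = 1\<^sub>m n" using V unfolding unitaryM_def by auto
  have A: "adj X * X \<in> carrier_mat n n" using aX X by auto
  have "V * G * adj V = (V * adj V) * (adj X * X) * (V * adj V)"
    unfolding G using Vc aV A by (simp add: assoc_mult_mat[of _ n n _ n _ n])
  then have AG: "adj X * X = V * G * adj V" using VV1 A by (simp add: left_mult_one_mat[OF A] right_mult_one_mat[OF A])
  have dA: "dim_row (adj X * X) = n" using X by simp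
  have "similar_mat_wit (adj X * X) G V (adj V)"
    unfolding similar_mat_wit_def Let_def dA using AG Vc aV Gc A VV1 VV2 by blast
  then have sim: "similar_mat (adj X * X) G" unfolding similar_mat_def by blast
  have ut: "upper_triangular G" using d Gc unfolding G_def upper_triangular_def by auto
  have cp: "char_poly (adj X * X) = (\<Prod>a\<leftarrow>diag_mat G. [:- a, 1:])"
    using char_poly_similar[OF sim] char_poly_upper_triangular[OF Gc ut] by simp
  have "proots (\<Prod>a\<leftarrow>diag_mat G. [:- a, 1:]) = mset (diag_mat G)" by (rule proots_lin)
  then have "sq_sing_vals X = mset (diag_mat G)" unfolding sq_sing_vals_def cp .
  also have "diag_mat G = map (\<lambda>i. complex_of_real ((colnorm (X * V) i)^2)) [0..<n]"
    unfolding diag_mat_def using Gc gram_diag[OF XV] by (auto simp: G_def)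
  finally show ?thesis .
qed

lemma schatten_from: assumes sv: "sq_sing_vals X = mset (map (\<lambda>i. complex_of_real ((c i)^2)) [0..<n])"
  and nn: "\<forall>i<n. c i \<ge> 0"
  shows "schatten (ereal s) X = (\<Sum>i<n. c i powr s) powr (1/s)"
    "schatten \<infinity> X = Max (insert 0 (c ` {..<n}))"
proof -
  have "image_mset (\<lambda>e. sqrt (Re e) powr s) (sq_sing_vals X) =
      image_mset (\<lambda>i. sqrt (Re (complex_of_real ((c i)^2))) powr s) (mset [0..<n])"
    unfolding sv by (simp only: mset_map multiset.map_comp o_def)
  also have "\<dots> = image_mset (\<lambda>i. c i powr s) (mset [0..<n])"
    by (rule image_mset_cong) (use nn in auto)
  finally have "sum_mset (image_mset (\<lambda>e. sqrt (Re e) powr s) (sq_sing_vals X)) = sum_list (map (\<lambda>i. c i powr s) [0..<n])"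
    by (simp only: sum_mset_sum_list mset_map[symmetric])
  also have "\<dots> = (\<Sum>i<n. c i powr s)"
    by (simp only: interv_sum_list_conv_sum_set_nat set_upt atLeast0LessThan)
  finally show "schatten (ereal s) X = (\<Sum>i<n. c i powr s) powr (1/s)" unfolding schatten_def by simp
  have "(\<lambda>e. sqrt (Re e)) ` set_mset (sq_sing_vals X) = (\<lambda>i. sqrt (Re (complex_of_real ((c i)^2)))) ` {..<n}"
    unfolding sv by (simp only: set_mset_mset set_map image_comp o_def set_upt atLeast0LessThan)
  also have "\<dots> = c ` {..<n}" by (rule image_cong) (use nn in auto)
  finally show "schatten \<infinity> X = Max (insert 0 (c ` {..<n}))" unfolding schatten_def by simp
qed

lemma wamgm: fixes x y \<alpha> :: real
  assumes x: "0 \<le> x" and y: "0 \<le> y" and a0: "0 \<le> \<alpha>" and a1: "\<alpha> \<le> 1"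
  shows "x powr \<alpha> * y powr (1 - \<alpha>) \<le> \<alpha> * x + (1 - \<alpha>) * y"
proof (cases "x = 0 \<or> y = 0")
  case True
  then show ?thesis using x y a0 a1 by auto
next
  case False
  then have x0: "0 < x" and y0: "0 < y" using x y by auto
  define A where "A = \<alpha> * x + (1 - \<alpha>) * y"
  have A0: "0 < A"
  proof (cases "\<alpha> = 0")
    case True then show ?thesis using y0 by (simp add: A_def)
  next
    case False
    then have "0 < \<alpha> * x" using a0 x0 by simp
    moreover have "0 \<le> (1 - \<alpha>) * y" using a1 y by simp
    ultimately show ?thesis unfolding A_def by linarith
  qed
  have l1: "ln (x / A) \<le> x / A - 1" using x0 A0 by (intro ln_le_minus_one) simp
  have l2: "ln (y / A) \<le> y / A - 1" using y0 A0 by (intro ln_le_minus_one) simp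
  have "\<alpha> * ln (x / A) + (1 - \<alpha>) * ln (y / A) \<le> \<alpha> * (x / A - 1) + (1 - \<alpha>) * (y / A - 1)"
    using l1 l2 a0 a1 by (intro add_mono mult_left_mono) auto
  also have "\<dots> = (\<alpha> * x + (1 - \<alpha>) * y - A) / A" using A0 by (simp add: field_simps)
  also have "\<dots> = 0" by (simp add: A_def)
  finally have "\<alpha> * ln x + (1 - \<alpha>) * ln y \<le> ln A"
    using x0 y0 A0 by (simp add: ln_div algebra_simps)
  then have "exp (\<alpha> * ln x + (1 - \<alpha>) * ln y) \<le> exp (ln A)" by simp
  then show ?thesis using x0 y0 A0 by (simp add: powr_def exp_add A_def)
qed

lemma young: fixes a b p q :: real
  assumes a: "0 \<le> a" and b: "0 \<le> b" and p: "1 < p" and q: "1 < q" and pq: "1/p + 1/q = 1"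
  shows "a * b \<le> a powr p / p + b powr q / q"
proof -
  have 1: "1 - 1/p = 1/q" using pq by simp
  have "(a powr p) powr (1/p) * (b powr q) powr (1 - 1/p) \<le> 1/p * a powr p + (1 - 1/p) * b powr q"
    using p by (intro wamgm) auto
  then show ?thesis unfolding 1 using a b p q by (simp add: powr_powr)
qed

lemma sum_powr_eq_0: fixes a :: "'i \<Rightarrow> real"
  assumes "finite I" "\<forall>i\<in>I. 0 \<le> a i" "(\<Sum>i\<in>I. a i powr p) = 0" "i \<in> I"
  shows "a i = 0"
proof -
  have "\<forall>i\<in>I. a i powr p = 0" using assms by (subst sum_nonneg_eq_0_iff[symmetric]) auto
  then show ?thesis using assms by auto
qed

lemma holder_sum: fixes a b :: "'i \<Rightarrow> real"
  assumes I: "finite I" and a: "\<forall>i\<in>I. 0 \<le> a i" and b: "\<forall>i\<in>I. 0 \<le> b i"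
    and p: "1 < p" and q: "1 < q" and pq: "1/p + 1/q = 1"
  shows "(\<Sum>i\<in>I. a i * b i) \<le> (\<Sum>i\<in>I. a i powr p) powr (1/p) * (\<Sum>i\<in>I. b i powr q) powr (1/q)"
proof -
  define SA where "SA = (\<Sum>i\<in>I. a i powr p)"
  define SB where "SB = (\<Sum>i\<in>I. b i powr q)"
  show ?thesis
  proof (cases "SA = 0 \<or> SB = 0")
    case True
    then have "\<forall>i\<in>I. a i * b i = 0"
      using sum_powr_eq_0[OF I a, of p] sum_powr_eq_0[OF I b, of q] unfolding SA_def SB_def by auto
    then have "(\<Sum>i\<in>I. a i * b i) = 0" by (intro sum.neutral) simp
    then show ?thesis by simp
  next
    case False
    have SA0: "0 < SA" using False a unfolding SA_def by (metis less_eq_real_def powr_ge_zero sum_nonneg)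
    have SB0: "0 < SB" using False b unfolding SB_def by (metis less_eq_real_def powr_ge_zero sum_nonneg)
    define A where "A = SA powr (1/p)"
    define B where "B = SB powr (1/q)"
    have A0: "0 < A" and B0: "0 < B" using SA0 SB0 by (auto simp: A_def B_def)
    have Ap: "A powr p = SA" using SA0 p by (simp add: A_def powr_powr)
    have Bq: "B powr q = SB" using SB0 q by (simp add: B_def powr_powr)
    have "(\<Sum>i\<in>I. (a i / A) * (b i / B)) \<le> (\<Sum>i\<in>I. (a i / A) powr p / p + (b i / B) powr q / q)"
      using a b A0 B0 p q pq by (intro sum_mono young) auto
    also have "\<dots> = (\<Sum>i\<in>I. a i powr p) / (A powr p) / p + (\<Sum>i\<in>I. b i powr q) / (B powr q) / q"
      using a b A0 B0 by (simp add: sum.distrib powr_divide sum_divide_distrib)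
    also have "\<dots> = 1" using SA0 SB0 pq unfolding Ap Bq SA_def[symmetric] SB_def[symmetric] by simp
    finally have "(\<Sum>i\<in>I. a i * b i) / (A * B) \<le> 1"
      by (simp add: sum_divide_distrib[symmetric] algebra_simps)
    then show ?thesis using A0 B0 unfolding A_def B_def SA_def SB_def by (simp add: divide_le_eq)
  qed
qed

lemma jensen_pow: fixes w t :: "'i \<Rightarrow> real"
  assumes I: "finite I" and w: "\<forall>i\<in>I. 0 \<le> w i" and t: "\<forall>i\<in>I. 0 \<le> t i"
    and w1: "(\<Sum>i\<in>I. w i) \<le> 1" and r: "1 \<le> r"
  shows "(\<Sum>i\<in>I. w i * t i) powr r \<le> (\<Sum>i\<in>I. w i * t i powr r)"
proof (cases "r = 1")
  case True
  then show ?thesis using w t by (simp add: sum_nonneg)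
next
  case False
  then have r1: "1 < r" using r by simp
  define r' where "r' = r / (r - 1)"
  have r'1: "1 < r'" using r1 unfolding r'_def by (simp add: field_simps)
  have rr: "1/r' + 1/r = 1" using r1 unfolding r'_def by (simp add: field_simps)
  have "(\<Sum>i\<in>I. w i * t i) = (\<Sum>i\<in>I. w i powr (1/r') * (w i powr (1/r) * t i))"
  proof (intro sum.cong refl)
    fix i assume i: "i \<in> I"
    have "w i powr (1/r') * w i powr (1/r) = w i powr 1"
      using rr by (simp add: powr_add[symmetric])
    then show "w i * t i = w i powr (1/r') * (w i powr (1/r) * t i)"
      using w i by (cases "w i = 0") (auto simp: mult.assoc[symmetric])
  qed
  also have "\<dots> \<le> (\<Sum>i\<in>I. (w i powr (1/r')) powr r') powr (1/r') * (\<Sum>i\<in>I. (w i powr (1/r) * t i) powr r) powr (1/r)"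
    using w t r1 r'1 rr by (intro holder_sum[OF I]) auto
  also have "(\<Sum>i\<in>I. (w i powr (1/r')) powr r') = (\<Sum>i\<in>I. w i)"
    using w r'1 by (intro sum.cong refl) (simp add: powr_powr)
  also have "(\<Sum>i\<in>I. (w i powr (1/r) * t i) powr r) = (\<Sum>i\<in>I. w i * t i powr r)"
    using w t r1 by (intro sum.cong refl) (simp add: powr_mult powr_powr)
  also have "(\<Sum>i\<in>I. w i) powr (1/r') \<le> 1"
  proof -
    have "(\<Sum>i\<in>I. w i) powr (1/r') \<le> 1 powr (1/r')"
      using w1 w r'1 by (intro powr_mono2) (auto simp: sum_nonneg)
    then show ?thesis by simp
  qed
  finally have "(\<Sum>i\<in>I. w i * t i) \<le> 1 * (\<Sum>i\<in>I. w i * t i powr r) powr (1/r)"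
    by (rule order_trans) (intro mult_right_mono, auto)
  then have "(\<Sum>i\<in>I. w i * t i) powr r \<le> ((\<Sum>i\<in>I. w i * t i powr r) powr (1/r)) powr r"
    using w t by (intro powr_mono2) (auto intro: sum_nonneg r1[THEN less_imp_le] order_trans[OF zero_le_one r])
  also have "\<dots> = (\<Sum>i\<in>I. w i * t i powr r)"
    using w t r1 by (simp add: powr_powr sum_nonneg)
  finally show ?thesis .
qed

lemma sqrt_powr: "0 \<le> x \<Longrightarrow> sqrt x powr q = x powr (q/2)"
  by (simp add: powr_half_sqrt[symmetric] powr_powr)

lemma sq_powr: assumes "0 \<le> (t::real)" shows "(t^2) powr (q/2) = t powr q"
proof (cases "t = 0")
  case False
  then have "t^2 = t powr 2" using assms by (simp add: powr_realpow)
  then have "(t^2) powr (q/2) = (t powr 2) powr (q/2)" by simp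
  also have "\<dots> = t powr q" by (simp add: powr_powr)
  finally show ?thesis .
qed simp

lemma core_p: fixes \<sigma> :: "'i \<Rightarrow> real" and \<tau> :: "'k \<Rightarrow> real"
  assumes I: "finite I" and K: "finite K"
    and \<sigma>: "\<forall>i\<in>I. 0 \<le> \<sigma> i" and \<tau>: "\<forall>k\<in>K. 0 \<le> \<tau> k"
    and M: "\<forall>i\<in>I. \<forall>k\<in>K. 0 \<le> M i k"
    and Mr: "\<forall>i\<in>I. (\<Sum>k\<in>K. M i k) \<le> 1" and Mc: "\<forall>k\<in>K. (\<Sum>i\<in>I. M i k) \<le> 1"
    and p1: "1 < p" and p2: "p \<le> 2" and q: "q = p / (p - 1)"
  shows "(\<Sum>i\<in>I. \<sigma> i * sqrt (\<Sum>k\<in>K. M i k * (\<tau> k)^2))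
     \<le> (\<Sum>i\<in>I. \<sigma> i powr p) powr (1/p) * (\<Sum>k\<in>K. \<tau> k powr q) powr (1/q)"
proof -
  define \<rho> where "\<rho> i = sqrt (\<Sum>k\<in>K. M i k * (\<tau> k)^2)" for i
  have inner0: "0 \<le> (\<Sum>k\<in>K. M i k * (\<tau> k)^2)" if "i \<in> I" for i
    using M that by (intro sum_nonneg) auto
  have \<rho>0: "\<forall>i\<in>I. 0 \<le> \<rho> i" using inner0 unfolding \<rho>_def by auto
  have q1: "1 < q" and q2: "2 \<le> q" using p1 p2 unfolding q by (auto simp: field_simps)
  have pq: "1/p + 1/q = 1" using p1 unfolding q by (simp add: field_simps)
  have "(\<Sum>i\<in>I. \<sigma> i * \<rho> i) \<le> (\<Sum>i\<in>I. \<sigma> i powr p) powr (1/p) * (\<Sum>i\<in>I. \<rho> i powr q) powr (1/q)"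
    by (rule holder_sum[OF I \<sigma> \<rho>0 p1 q1 pq])
  also have "(\<Sum>i\<in>I. \<rho> i powr q) \<le> (\<Sum>k\<in>K. \<tau> k powr q)"
  proof -
    have "(\<Sum>i\<in>I. \<rho> i powr q) \<le> (\<Sum>i\<in>I. \<Sum>k\<in>K. M i k * \<tau> k powr q)"
    proof (intro sum_mono)
      fix i assume i: "i \<in> I"
      have "\<rho> i powr q = (\<Sum>k\<in>K. M i k * (\<tau> k)^2) powr (q/2)"
        unfolding \<rho>_def using inner0[OF i] by (rule sqrt_powr)
      also have "\<dots> \<le> (\<Sum>k\<in>K. M i k * ((\<tau> k)^2) powr (q/2))"
        using M i \<tau> Mr q2 by (intro jensen_pow[OF K]) auto
      also have "\<dots> = (\<Sum>k\<in>K. M i k * \<tau> k powr q)"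
        using \<tau> by (intro sum.cong refl) (simp add: sq_powr)
      finally show "\<rho> i powr q \<le> (\<Sum>k\<in>K. M i k * \<tau> k powr q)" .
    qed
    also have "\<dots> = (\<Sum>k\<in>K. (\<Sum>i\<in>I. M i k) * \<tau> k powr q)"
      by (subst sum.swap) (simp add: sum_distrib_right)
    also have "\<dots> \<le> (\<Sum>k\<in>K. 1 * \<tau> k powr q)"
      using Mc by (intro sum_mono mult_right_mono) auto
    finally show ?thesis by simp
  qed
  then have "(\<Sum>i\<in>I. \<rho> i powr q) powr (1/q) \<le> (\<Sum>k\<in>K. \<tau> k powr q) powr (1/q)"
    using q1 by (intro powr_mono2) (auto intro: sum_nonneg)
  then have "(\<Sum>i\<in>I. \<sigma> i powr p) powr (1/p) * (\<Sum>i\<in>I. \<rho> i powr q) powr (1/q) \<le>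
      (\<Sum>i\<in>I. \<sigma> i powr p) powr (1/p) * (\<Sum>k\<in>K. \<tau> k powr q) powr (1/q)"
    by (intro mult_left_mono) auto
  finally show ?thesis unfolding \<rho>_def by (simp add: mult_left_mono)
qed

lemma core_1: fixes \<sigma> :: "'i \<Rightarrow> real" and \<tau> :: "'k \<Rightarrow> real"
  assumes I: "finite I" and K: "finite K"
    and \<sigma>: "\<forall>i\<in>I. 0 \<le> \<sigma> i" and \<tau>: "\<forall>k\<in>K. 0 \<le> \<tau> k"
    and M: "\<forall>i\<in>I. \<forall>k\<in>K. 0 \<le> M i k"
    and Mr: "\<forall>i\<in>I. (\<Sum>k\<in>K. M i k) \<le> 1"
  shows "(\<Sum>i\<in>I. \<sigma> i * sqrt (\<Sum>k\<in>K. M i k * (\<tau> k)^2))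
     \<le> (\<Sum>i\<in>I. \<sigma> i) * Max (insert 0 (\<tau> ` K))"
proof -
  define T where "T = Max (insert 0 (\<tau> ` K))"
  have T0: "0 \<le> T" unfolding T_def using K by simp
  have Tk: "\<tau> k \<le> T" if "k \<in> K" for k unfolding T_def using K that by simp
  have "(\<Sum>i\<in>I. \<sigma> i * sqrt (\<Sum>k\<in>K. M i k * (\<tau> k)^2)) \<le> (\<Sum>i\<in>I. \<sigma> i * T)"
  proof (intro sum_mono mult_left_mono)
    fix i assume i: "i \<in> I"
    show "0 \<le> \<sigma> i" using \<sigma> i by auto
    have "(\<Sum>k\<in>K. M i k * (\<tau> k)^2) \<le> (\<Sum>k\<in>K. M i k * T^2)"
      using M i \<tau> Tk by (intro sum_mono mult_left_mono power_mono) auto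
    also have "\<dots> = (\<Sum>k\<in>K. M i k) * T^2" by (simp add: sum_distrib_right)
    also have "\<dots> \<le> 1 * T^2" using Mr i by (intro mult_right_mono) auto
    finally have "(\<Sum>k\<in>K. M i k * (\<tau> k)^2) \<le> T^2" by simp
    then have "sqrt (\<Sum>k\<in>K. M i k * (\<tau> k)^2) \<le> sqrt (T^2)" by (rule real_sqrt_le_mono)
    then show "sqrt (\<Sum>k\<in>K. M i k * (\<tau> k)^2) \<le> T" using T0 by simp
  qed
  then show ?thesis unfolding T_def by (simp add: sum_distrib_right)
qed

definition frob :: "complex mat \<Rightarrow> complex mat \<Rightarrow> complex" where
  "frob X Y = (\<Sum>a<dim_row X. \<Sum>b<dim_col X. cnj (X $$ (a,b)) * Y $$ (a,b))"

lemma cauchy_schwarz_c: fixes x y :: "'i \<Rightarrow> complex" assumes I: "finite I"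
  shows "cmod (\<Sum>a\<in>I. cnj (x a) * y a) \<le> sqrt (\<Sum>a\<in>I. (cmod (x a))^2) * sqrt (\<Sum>a\<in>I. (cmod (y a))^2)"
proof -
  have "cmod (\<Sum>a\<in>I. cnj (x a) * y a) \<le> (\<Sum>a\<in>I. cmod (x a) * cmod (y a))"
    by (rule order_trans[OF norm_sum]) (simp add: norm_mult)
  also have "\<dots> \<le> (\<Sum>a\<in>I. cmod (x a) powr 2) powr (1/2) * (\<Sum>a\<in>I. cmod (y a) powr 2) powr (1/2)"
    by (rule holder_sum[OF I]) auto
  also have "\<dots> = sqrt (\<Sum>a\<in>I. (cmod (x a))^2) * sqrt (\<Sum>a\<in>I. (cmod (y a))^2)"
  proof -
    have e: "cmod z powr 2 = (cmod z)^2" for z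
      by (cases "z = 0") (simp_all add: powr_realpow)
    show ?thesis unfolding e by (simp add: powr_half_sqrt sum_nonneg)
  qed
  finally show ?thesis .
qed

lemma unitary_adj: "unitaryM n U \<Longrightarrow> unitaryM n (adj U)"
  unfolding unitaryM_def by (auto intro: adj_carrierI)

lemma cmod_sum_1: fixes z :: "nat \<Rightarrow> complex"
  assumes "(\<Sum>k<n. cnj (z k) * z k) = 1" shows "(\<Sum>k<n. (cmod (z k))^2) = 1"
proof -
  have "complex_of_real (\<Sum>k<n. (cmod (z k))^2) = (\<Sum>k<n. cnj (z k) * z k)"
    unfolding of_real_sum by (intro sum.cong refl) (simp only: complex_norm_square mult.commute)
  then have "complex_of_real (\<Sum>k<n. (cmod (z k))^2) = 1" using assms by (simp only:)
  then show ?thesis by (simp only: of_real_eq_1_iff)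
qed

lemma frob_rot: assumes X: "X \<in> carrier_mat m n" and Y: "Y \<in> carrier_mat m n" and U: "unitaryM n U"
  shows "frob X Y = (\<Sum>i<n. \<Sum>a<m. cnj ((X * U) $$ (a,i)) * (Y * U) $$ (a,i))"
proof -
  have Uc: "U \<in> carrier_mat n n" using U unfolding unitaryM_def by auto
  have row: "(\<Sum>i<n. cnj ((X * U) $$ (a,i)) * (Y * U) $$ (a,i)) = (\<Sum>b<n. cnj (X $$ (a,b)) * Y $$ (a,b))"
    if a: "a < m" for a
  proof -
    have "(\<Sum>i<n. cnj ((X * U) $$ (a,i)) * (Y * U) $$ (a,i))
        = (\<Sum>i<n. (\<Sum>b<n. cnj (X $$ (a,b)) * cnj (U $$ (b,i))) * (\<Sum>c<n. Y $$ (a,c) * U $$ (c,i)))"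
      using a by (intro sum.cong refl) (simp add: mult_entry[OF X Uc] mult_entry[OF Y Uc] cnj_sum)
    also have "\<dots> = (\<Sum>i<n. \<Sum>b<n. \<Sum>c<n. cnj (X $$ (a,b)) * Y $$ (a,c) * (U $$ (c,i) * cnj (U $$ (b,i))))"
      by (simp only: sum_product) (simp add: ac_simps)
    also have "\<dots> = (\<Sum>b<n. \<Sum>c<n. \<Sum>i<n. cnj (X $$ (a,b)) * Y $$ (a,c) * (U $$ (c,i) * cnj (U $$ (b,i))))"
      by (subst sum.swap, rule sum.cong[OF refl], subst sum.swap, rule refl)
    also have "\<dots> = (\<Sum>b<n. \<Sum>c<n. cnj (X $$ (a,b)) * Y $$ (a,c) * (if c = b then 1 else 0))"
      by (intro sum.cong refl) (simp add: sum_distrib_left[symmetric] unitary_rows[OF U])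
    also have "\<dots> = (\<Sum>b<n. cnj (X $$ (a,b)) * Y $$ (a,b))"
      by (intro sum.cong refl) (simp add: sum_delta2)
    finally show ?thesis .
  qed
  have "frob X Y = (\<Sum>a<m. \<Sum>b<n. cnj (X $$ (a,b)) * Y $$ (a,b))" using X unfolding frob_def by simp
  also have "\<dots> = (\<Sum>a<m. \<Sum>i<n. cnj ((X * U) $$ (a,i)) * (Y * U) $$ (a,i))" using row by simp
  also have "\<dots> = (\<Sum>i<n. \<Sum>a<m. cnj ((X * U) $$ (a,i)) * (Y * U) $$ (a,i))" by (rule sum.swap)
  finally show ?thesis .
qed

lemma holder_setup: assumes X: "X \<in> carrier_mat m n" and Y: "Y \<in> carrier_mat m n"
  shows "\<exists>\<sigma> \<tau> M. (\<forall>i<n. 0 \<le> \<sigma> i) \<and> (\<forall>k<n. 0 \<le> \<tau> k) \<and> (\<forall>i<n. \<forall>k<n. 0 \<le> M i k) \<and>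
     (\<forall>i<n. (\<Sum>k<n. M i k) = 1) \<and> (\<forall>k<n. (\<Sum>i<n. M i k) = 1) \<and>
     sq_sing_vals X = mset (map (\<lambda>i. complex_of_real ((\<sigma> i)^2)) [0..<n]) \<and>
     sq_sing_vals Y = mset (map (\<lambda>i. complex_of_real ((\<tau> i)^2)) [0..<n]) \<and>
     cmod (frob X Y) \<le> (\<Sum>i<n. \<sigma> i * sqrt (\<Sum>k<n. M i k * (\<tau> k)^2))"
proof -
  obtain U where U: "unitaryM n U" and Ud: "\<forall>i<n. \<forall>j<n. i \<noteq> j \<longrightarrow> (adj (X * U) * (X * U)) $$ (i,j) = 0"
    using svd_exists[OF X] by blast
  obtain W where W: "unitaryM n W" and Wd: "\<forall>i<n. \<forall>j<n. i \<noteq> j \<longrightarrow> (adj (Y * W) * (Y * W)) $$ (i,j) = 0"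
    using svd_exists[OF Y] by blast
  have Uc: "U \<in> carrier_mat n n" and Wc: "W \<in> carrier_mat n n" using U W unfolding unitaryM_def by auto
  have aW: "adj W \<in> carrier_mat n n" using Wc by (rule adj_carrierI)
  define P where "P = X * U"
  define Q where "Q = Y * W"
  define R where "R = adj W * U"
  have Pc: "P \<in> carrier_mat m n" and Qc: "Q \<in> carrier_mat m n" and Rc: "R \<in> carrier_mat n n"
    unfolding P_def Q_def R_def using X Y Uc Wc aW by auto
  have aQ: "adj Q \<in> carrier_mat n m" using Qc by (rule adj_carrierI)
  have aR: "adj R \<in> carrier_mat n n" using Rc by (rule adj_carrierI)
  have R: "unitaryM n R" unfolding R_def by (rule unitary_mult[OF unitary_adj[OF W] U])
  define \<sigma> where "\<sigma> = colnorm P"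
  define \<tau> where "\<tau> = colnorm Q"
  define M where "M i k = (cmod (R $$ (k,i)))^2" for i k
  have \<sigma>0: "\<forall>i<n. 0 \<le> \<sigma> i" unfolding \<sigma>_def colnorm_def by (simp add: sum_nonneg)
  have \<tau>0: "\<forall>k<n. 0 \<le> \<tau> k" unfolding \<tau>_def colnorm_def by (simp add: sum_nonneg)
  have M0: "\<forall>i<n. \<forall>k<n. 0 \<le> M i k" unfolding M_def by simp
  have Mr: "\<forall>i<n. (\<Sum>k<n. M i k) = 1"
    unfolding M_def using unitary_cols[OF R] by (auto intro: cmod_sum_1)
  have Mc: "\<forall>k<n. (\<Sum>i<n. M i k) = 1"
  proof (intro allI impI)
    fix k assume k: "k < n"
    have "(\<Sum>i<n. cnj (cnj (R $$ (k,i))) * cnj (R $$ (k,i))) = 1"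
      using unitary_rows[OF R k k] by (simp add: mult.commute)
    from cmod_sum_1[OF this] show "(\<Sum>i<n. M i k) = 1" unfolding M_def by simp
  qed
  have svX: "sq_sing_vals X = mset (map (\<lambda>i. complex_of_real ((\<sigma> i)^2)) [0..<n])"
    unfolding \<sigma>_def P_def by (rule sq_sing_vals_from[OF X U Ud])
  have svY: "sq_sing_vals Y = mset (map (\<lambda>i. complex_of_real ((\<tau> i)^2)) [0..<n])"
    unfolding \<tau>_def Q_def by (rule sq_sing_vals_from[OF Y W Wd])
  have YU: "Y * U = Q * R"
  proof -
    have "Q * R = Y * (W * adj W) * U" unfolding Q_def R_def using Y Wc aW Uc
      by (simp add: assoc_mult_mat[of _ m n _ n _ n] assoc_mult_mat[of _ n n _ n _ n])
    also have "W * adj W = 1\<^sub>m n" using W unfolding unitaryM_def by auto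
    finally show ?thesis using Y by simp
  qed
  have rho: "colnorm (Y * U) i = sqrt (\<Sum>k<n. M i k * (\<tau> k)^2)" if i: "i < n" for i
  proof -
    have QR: "Q * R \<in> carrier_mat m n" using Qc Rc by auto
    have G: "adj (Q * R) * (Q * R) = adj R * (adj Q * Q) * R"
      using adj_mult[OF Qc Rc] aR aQ Qc Rc
      by (simp add: assoc_mult_mat[of _ n n _ m _ n] assoc_mult_mat[of _ n m _ m _ n] assoc_mult_mat[of _ n n _ n _ n] assoc_mult_mat[of _ n m _ n _ n])
    have QQ: "adj Q * Q \<in> carrier_mat n n" using aQ Qc by auto
    have "complex_of_real ((colnorm (Q * R) i)^2) = (adj R * (adj Q * Q) * R) $$ (i,i)"
      using gram_diag[OF QR i] G by simp
    also have "\<dots> = (\<Sum>a<n. \<Sum>b<n. cnj (R $$ (a,i)) * (adj Q * Q) $$ (a,b) * R $$ (b,i))"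
      by (rule triple_entry[OF Rc QQ Rc i i])
    also have "\<dots> = (\<Sum>a<n. cnj (R $$ (a,i)) * (adj Q * Q) $$ (a,a) * R $$ (a,i))"
    proof (intro sum.cong refl)
      fix a assume a: "a \<in> {..<n}"
      have "(\<Sum>b<n. cnj (R $$ (a,i)) * (adj Q * Q) $$ (a,b) * R $$ (b,i))
          = (\<Sum>b<n. if b = a then cnj (R $$ (a,i)) * (adj Q * Q) $$ (a,b) * R $$ (b,i) else 0)"
        using Wd a unfolding Q_def by (intro sum.cong refl) auto
      also have "\<dots> = cnj (R $$ (a,i)) * (adj Q * Q) $$ (a,a) * R $$ (a,i)" using a by simp
      finally show "(\<Sum>b<n. cnj (R $$ (a,i)) * (adj Q * Q) $$ (a,b) * R $$ (b,i))
          = cnj (R $$ (a,i)) * (adj Q * Q) $$ (a,a) * R $$ (a,i)" .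
    qed
    also have "\<dots> = (\<Sum>a<n. complex_of_real (M i a * (\<tau> a)^2))"
    proof (intro sum.cong refl)
      fix a assume a: "a \<in> {..<n}"
      have "(adj Q * Q) $$ (a,a) = complex_of_real ((\<tau> a)^2)" unfolding \<tau>_def using gram_diag[OF Qc] a by simp
      moreover have e1: "cnj (R $$ (a,i)) * R $$ (a,i) = complex_of_real (M i a)"
        unfolding M_def by (simp only: complex_norm_square mult.commute)
      moreover have "cnj (R $$ (a,i)) * (adj Q * Q) $$ (a,a) * R $$ (a,i) = (cnj (R $$ (a,i)) * R $$ (a,i)) * (adj Q * Q) $$ (a,a)"
        by (simp only: ac_simps)
      ultimately show "cnj (R $$ (a,i)) * (adj Q * Q) $$ (a,a) * R $$ (a,i) = complex_of_real (M i a * (\<tau> a)^2)"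
        by (simp only: of_real_mult)
    qed
    also have "\<dots> = complex_of_real (\<Sum>a<n. M i a * (\<tau> a)^2)" by simp
    finally have "(colnorm (Q * R) i)^2 = (\<Sum>a<n. M i a * (\<tau> a)^2)" by (simp only: of_real_eq_iff)
    moreover have c0: "0 \<le> colnorm (Q * R) i" unfolding colnorm_def by (simp add: sum_nonneg)
    ultimately have "sqrt (\<Sum>a<n. M i a * (\<tau> a)^2) = colnorm (Q * R) i" by (rule real_sqrt_unique)
    then show ?thesis unfolding YU by simp
  qed
  have "frob X Y = (\<Sum>i<n. \<Sum>a<m. cnj (P $$ (a,i)) * (Y * U) $$ (a,i))"
    unfolding P_def by (rule frob_rot[OF X Y U])
  then have "cmod (frob X Y) \<le> (\<Sum>i<n. cmod (\<Sum>a<m. cnj (P $$ (a,i)) * (Y * U) $$ (a,i)))"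
    by (simp add: norm_sum)
  also have "\<dots> \<le> (\<Sum>i<n. \<sigma> i * colnorm (Y * U) i)"
  proof (intro sum_mono)
    fix i assume i: "i \<in> {..<n}"
    have "cmod (\<Sum>a<m. cnj (P $$ (a,i)) * (Y * U) $$ (a,i)) \<le>
       sqrt (\<Sum>a<m. (cmod (P $$ (a,i)))^2) * sqrt (\<Sum>a<m. (cmod ((Y * U) $$ (a,i)))^2)"
      by (rule cauchy_schwarz_c) simp
    then show "cmod (\<Sum>a<m. cnj (P $$ (a,i)) * (Y * U) $$ (a,i)) \<le> \<sigma> i * colnorm (Y * U) i"
      unfolding \<sigma>_def colnorm_def using Pc Y by simp
  qed
  also have "\<dots> = (\<Sum>i<n. \<sigma> i * sqrt (\<Sum>k<n. M i k * (\<tau> k)^2))"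
    using rho by simp
  finally show ?thesis using \<sigma>0 \<tau>0 M0 Mr Mc svX svY by blast
qed

lemma holder_p: assumes X: "X \<in> carrier_mat m n" and Y: "Y \<in> carrier_mat m n"
  and p1: "1 < p" and p2: "p \<le> 2"
  shows "cmod (frob X Y) \<le> schatten (ereal p) X * schatten (ereal (p / (p - 1))) Y"
proof -
  obtain \<sigma> \<tau> M where \<sigma>: "\<forall>i<n. 0 \<le> \<sigma> i" and \<tau>: "\<forall>k<n. 0 \<le> \<tau> k" and M: "\<forall>i<n. \<forall>k<n. 0 \<le> M i k"
    and Mr: "\<forall>i<n. (\<Sum>k<n. M i k) = 1" and Mc: "\<forall>k<n. (\<Sum>i<n. M i k) = 1"
    and svX: "sq_sing_vals X = mset (map (\<lambda>i. complex_of_real ((\<sigma> i)^2)) [0..<n])"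
    and svY: "sq_sing_vals Y = mset (map (\<lambda>i. complex_of_real ((\<tau> i)^2)) [0..<n])"
    and le: "cmod (frob X Y) \<le> (\<Sum>i<n. \<sigma> i * sqrt (\<Sum>k<n. M i k * (\<tau> k)^2))"
    using holder_setup[OF X Y] by blast
  have "(\<Sum>i<n. \<sigma> i * sqrt (\<Sum>k<n. M i k * (\<tau> k)^2)) \<le>
     (\<Sum>i<n. \<sigma> i powr p) powr (1/p) * (\<Sum>k<n. \<tau> k powr (p / (p - 1))) powr (1/(p / (p - 1)))"
    by (rule core_p) (use \<sigma> \<tau> M Mr Mc p1 p2 in auto)
  also have "\<dots> = schatten (ereal p) X * schatten (ereal (p / (p - 1))) Y"
    using schatten_from(1)[OF svX \<sigma>] schatten_from(1)[OF svY \<tau>] by simp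
  finally show ?thesis using le by linarith
qed

lemma holder_1: assumes X: "X \<in> carrier_mat m n" and Y: "Y \<in> carrier_mat m n"
  shows "cmod (frob X Y) \<le> schatten (ereal 1) X * schatten \<infinity> Y"
proof -
  obtain \<sigma> \<tau> M where \<sigma>: "\<forall>i<n. 0 \<le> \<sigma> i" and \<tau>: "\<forall>k<n. 0 \<le> \<tau> k" and M: "\<forall>i<n. \<forall>k<n. 0 \<le> M i k"
    and Mr: "\<forall>i<n. (\<Sum>k<n. M i k) = 1" and Mc: "\<forall>k<n. (\<Sum>i<n. M i k) = 1"
    and svX: "sq_sing_vals X = mset (map (\<lambda>i. complex_of_real ((\<sigma> i)^2)) [0..<n])"
    and svY: "sq_sing_vals Y = mset (map (\<lambda>i. complex_of_real ((\<tau> i)^2)) [0..<n])"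
    and le: "cmod (frob X Y) \<le> (\<Sum>i<n. \<sigma> i * sqrt (\<Sum>k<n. M i k * (\<tau> k)^2))"
    using holder_setup[OF X Y] by blast
  have "(\<Sum>i<n. \<sigma> i * sqrt (\<Sum>k<n. M i k * (\<tau> k)^2)) \<le> (\<Sum>i<n. \<sigma> i) * Max (insert 0 (\<tau> ` {..<n}))"
    by (rule core_1) (use \<sigma> \<tau> M Mr in auto)
  also have "(\<Sum>i<n. \<sigma> i) = schatten (ereal 1) X"
  proof -
    have "schatten (ereal 1) X = (\<Sum>i<n. \<sigma> i powr 1) powr (1/1)" by (rule schatten_from(1)[OF svX \<sigma>])
    also have "(\<Sum>i<n. \<sigma> i powr 1) = (\<Sum>i<n. \<sigma> i)" using \<sigma> by (intro sum.cong) auto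
    also have "0 \<le> (\<Sum>i<n. \<sigma> i)" using \<sigma> by (intro sum_nonneg) auto
    then have "(\<Sum>i<n. \<sigma> i) powr (1/1) = (\<Sum>i<n. \<sigma> i)" by simp
    finally show ?thesis by simp
  qed
  also have "Max (insert 0 (\<tau> ` {..<n})) = schatten \<infinity> Y" using schatten_from(2)[OF svY \<tau>] by simp
  finally show ?thesis using le by linarith
qed

lemma sum_split_add: "(\<Sum>b<s+(t::nat). f b) = (\<Sum>b<s. f b) + (\<Sum>j<t. f (s + j) :: 'a::comm_monoid_add)"
  by (induction t) (simp_all add: add.assoc)

lemma sum_blocks: "(\<Sum>b<(\<Sum>k<N. w k). f b) = (\<Sum>k<N. \<Sum>j<w k. f (offs w k + j) :: 'a::comm_monoid_add)"
proof (induction N)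
  case (Suc N)
  have "offs w (Suc N) = offs w N + w N" and "offs w N = (\<Sum>k<N. w k)" by (simp_all add: offs_def)
  then show ?case using Suc by (simp add: sum_split_add)
qed simp

lemma frob_blk: "frob (blk X r0 h c0 c) (blk Y r0 h c0 c) =
   (\<Sum>a<h. \<Sum>j<c. cnj (X $$ (r0 + a, c0 + j)) * Y $$ (r0 + a, c0 + j))"
  unfolding frob_def blk_def by simp

lemma frob_blocks: assumes X: "X \<in> carrier_mat (m1 + m2) (\<Sum>k<N. w k)" and Y: "Y \<in> carrier_mat (m1 + m2) (\<Sum>k<N. w k)"
  shows "frob X Y = (\<Sum>k<N. \<Sum>i<2. frob (block2 X m1 m2 w i k) (block2 Y m1 m2 w i k))"
proof -
  let ?f = "\<lambda>a b. cnj (X $$ (a, b)) * Y $$ (a, b)"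
  have "frob X Y = (\<Sum>a<m1+m2. \<Sum>b<(\<Sum>k<N. w k). ?f a b)" using X unfolding frob_def by simp
  also have "\<dots> = (\<Sum>a<m1+m2. \<Sum>k<N. \<Sum>j<w k. ?f a (offs w k + j))" by (simp only: sum_blocks)
  also have "\<dots> = (\<Sum>k<N. \<Sum>a<m1+m2. \<Sum>j<w k. ?f a (offs w k + j))" by (rule sum.swap)
  also have "\<dots> = (\<Sum>k<N. (\<Sum>a<m1. \<Sum>j<w k. ?f a (offs w k + j)) + (\<Sum>a<m2. \<Sum>j<w k. ?f (m1 + a) (offs w k + j)))"
    by (simp only: sum_split_add)
  also have "\<dots> = (\<Sum>k<N. \<Sum>i<2. frob (block2 X m1 m2 w i k) (block2 Y m1 m2 w i k))"
    by (intro sum.cong refl) (simp add: block2_def frob_blk numeral_2_eq_2)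
  finally show ?thesis .
qed

lemma frob_compr: "frob (compr r N X m1 m2 w) (compr r' N Y m1 m2 w) =
   complex_of_real (\<Sum>k<N. \<Sum>i<2. schatten r (block2 X m1 m2 w i k) * schatten r' (block2 Y m1 m2 w i k))"
proof -
  have "frob (compr r N X m1 m2 w) (compr r' N Y m1 m2 w) =
     (\<Sum>i<2. \<Sum>k<N. complex_of_real (schatten r (block2 X m1 m2 w i k) * schatten r' (block2 Y m1 m2 w i k)))"
    unfolding frob_def compr_def by simp
  also have "\<dots> = (\<Sum>k<N. \<Sum>i<2. complex_of_real (schatten r (block2 X m1 m2 w i k) * schatten r' (block2 Y m1 m2 w i k)))"
    by (rule sum.swap)
  finally show ?thesis by simp
qed

lemma block2_carrier: "block2 X m1 m2 w i k \<in> carrier_mat (if i = 0 then m1 else m2) (w k)"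
  unfolding block2_def blk_def by simp

lemma schatten_nonneg_ereal: "0 \<le> schatten (ereal s) X"
  unfolding schatten_def by simp

lemma schatten_nonneg_inf: "0 \<le> schatten \<infinity> X"
proof -
  have "finite (insert 0 ((\<lambda>e. sqrt (Re e)) ` set_mset (sq_sing_vals X)))" by simp
  then show ?thesis unfolding schatten_def by (simp add: Max_ge_iff)
qed

lemma schatten_nonneg: "0 \<le> schatten r X"
  by (cases r) (simp_all add: schatten_nonneg_ereal schatten_nonneg_inf, simp add: schatten_def)

lemma block_holder: assumes S: "S \<in> carrier_mat (m1 + m2) (\<Sum>k<N. w k)" and T: "T \<in> carrier_mat (m1 + m2) (\<Sum>k<N. w k)"
  and H: "\<And>X Y a b. X \<in> carrier_mat a b \<Longrightarrow> Y \<in> carrier_mat a b \<Longrightarrow> cmod (frob X Y) \<le> schatten r X * schatten r' Y"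
  shows "cmod (frob S T) \<le> schatten r (compr r N S m1 m2 w) * schatten r' (compr r' N T m1 m2 w)"
proof -
  have "cmod (frob S T) \<le> (\<Sum>k<N. \<Sum>i<2. cmod (frob (block2 S m1 m2 w i k) (block2 T m1 m2 w i k)))"
    unfolding frob_blocks[OF S T] by (rule order_trans[OF norm_sum sum_mono]) (rule norm_sum)
  also have "\<dots> \<le> (\<Sum>k<N. \<Sum>i<2. schatten r (block2 S m1 m2 w i k) * schatten r' (block2 T m1 m2 w i k))"
    by (intro sum_mono H[OF block2_carrier block2_carrier])
  also have "\<dots> = cmod (frob (compr r N S m1 m2 w) (compr r' N T m1 m2 w))"
    unfolding frob_compr norm_of_real
    by (intro abs_of_nonneg[symmetric] sum_nonneg mult_nonneg_nonneg schatten_nonneg)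
  also have "\<dots> \<le> schatten r (compr r N S m1 m2 w) * schatten r' (compr r' N T m1 m2 w)"
    by (rule H[of _ 2 N]) (simp_all add: compr_def)
  finally show ?thesis .
qed

lemma construct: assumes T: "T \<in> carrier_mat m n" and V: "unitaryM n V"
  and Td: "\<forall>i<n. \<forall>j<n. i \<noteq> j \<longrightarrow> (adj (T * V) * (T * V)) $$ (i,j) = 0"
  and g: "\<forall>i<n. 0 \<le> g i"
  shows "\<exists>S. S \<in> carrier_mat m n \<and> frob S T = complex_of_real (\<Sum>i<n. g i * (colnorm (T * V) i)^2) \<and>
    sq_sing_vals S = mset (map (\<lambda>i. complex_of_real ((g i * colnorm (T * V) i)^2)) [0..<n])"
proof -
  have Vc: "V \<in> carrier_mat n n" using V unfolding unitaryM_def by auto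
  have aV: "adj V \<in> carrier_mat n n" using Vc by (rule adj_carrierI)
  define P where "P = T * V"
  have Pc: "P \<in> carrier_mat m n" unfolding P_def using T Vc by auto
  define Dg where "Dg = mat n n (\<lambda>(i,j). if i = j then complex_of_real (g i) else 0)"
  have Dc: "Dg \<in> carrier_mat n n" unfolding Dg_def by simp
  define Q where "Q = P * Dg"
  have Qc: "Q \<in> carrier_mat m n" unfolding Q_def using Pc Dc by auto
  define S where "S = Q * adj V"
  have Sc: "S \<in> carrier_mat m n" unfolding S_def using Qc aV by auto
  have SV: "S * V = Q"
  proof -
    have "S * V = Q * (adj V * V)" unfolding S_def using Qc aV Vc by (simp add: assoc_mult_mat[of _ m n _ n _ n])
    also have "adj V * V = 1\<^sub>m n" using V unfolding unitaryM_def by auto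
    finally show ?thesis using Qc by simp
  qed
  have Qe: "Q $$ (a,i) = P $$ (a,i) * complex_of_real (g i)" if a: "a < m" and i: "i < n" for a i
  proof -
    have "Q $$ (a,i) = (\<Sum>j<n. P $$ (a,j) * Dg $$ (j,i))" unfolding Q_def by (rule mult_entry[OF Pc Dc a i])
    also have "\<dots> = (\<Sum>j<n. if j = i then P $$ (a,j) * complex_of_real (g i) else 0)"
      using i by (intro sum.cong refl) (auto simp: Dg_def)
    also have "\<dots> = P $$ (a,i) * complex_of_real (g i)" using i by simp
    finally show ?thesis .
  qed
  have aP: "adj P \<in> carrier_mat n m" using Pc by (rule adj_carrierI)
  have aQ: "adj Q \<in> carrier_mat n m" using Qc by (rule adj_carrierI)
  have Qd: "\<forall>i<n. \<forall>j<n. i \<noteq> j \<longrightarrow> (adj (S * V) * (S * V)) $$ (i,j) = 0"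
  proof (intro allI impI)
    fix i j assume i: "i < n" and j: "j < n" and ij: "i \<noteq> j"
    have "(adj Q * Q) $$ (i,j) = (\<Sum>a<m. adj Q $$ (i,a) * Q $$ (a,j))" by (rule mult_entry[OF aQ Qc i j])
    also have "\<dots> = (\<Sum>a<m. complex_of_real (g i * g j) * (adj P $$ (i,a) * P $$ (a,j)))"
      using i j Qc Pc by (intro sum.cong refl) (simp add: Qe)
    also have "\<dots> = complex_of_real (g i * g j) * (adj P * P) $$ (i,j)"
      by (simp add: mult_entry[OF aP Pc i j] sum_distrib_left)
    also have "(adj P * P) $$ (i,j) = 0" using Td i j ij unfolding P_def by auto
    finally show "(adj (S * V) * (S * V)) $$ (i,j) = 0" unfolding SV by simp
  qed
  have cn: "colnorm Q i = g i * colnorm P i" if i: "i < n" for i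
  proof -
    have "(\<Sum>a<m. (cmod (Q $$ (a,i)))^2) = (\<Sum>a<m. (g i)^2 * (cmod (P $$ (a,i)))^2)"
      using i g by (intro sum.cong refl) (simp add: Qe norm_mult power_mult_distrib)
    then have "colnorm Q i = sqrt ((g i)^2 * (\<Sum>a<m. (cmod (P $$ (a,i)))^2))"
      unfolding colnorm_def using Qc by (simp add: sum_distrib_left)
    then show ?thesis unfolding colnorm_def using Pc g i by (simp add: real_sqrt_mult)
  qed
  have sv: "sq_sing_vals S = mset (map (\<lambda>i. complex_of_real ((g i * colnorm (T * V) i)^2)) [0..<n])"
  proof -
    have "map (\<lambda>i. complex_of_real ((colnorm Q i)^2)) [0..<n] = map (\<lambda>i. complex_of_real ((g i * colnorm P i)^2)) [0..<n]"
      by (rule map_cong) (auto simp: cn)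
    moreover have "sq_sing_vals S = mset (map (\<lambda>i. complex_of_real ((colnorm Q i)^2)) [0..<n])"
      using sq_sing_vals_from[OF Sc V Qd] unfolding SV .
    ultimately show ?thesis unfolding P_def by (simp only:)
  qed
  have "frob S T = (\<Sum>i<n. \<Sum>a<m. cnj ((S * V) $$ (a,i)) * (T * V) $$ (a,i))" by (rule frob_rot[OF Sc T V])
  also have "\<dots> = (\<Sum>i<n. complex_of_real (g i * (colnorm (T * V) i)^2))"
  proof (intro sum.cong refl)
    fix i assume i: "i \<in> {..<n}"
    have "(\<Sum>a<m. cnj ((S * V) $$ (a,i)) * (T * V) $$ (a,i)) = (\<Sum>a<m. complex_of_real (g i * (cmod (P $$ (a,i)))^2))"
      unfolding SV P_def[symmetric]
    proof (intro sum.cong refl)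
      fix a assume a: "a \<in> {..<m}"
      have "cnj (Q $$ (a,i)) * P $$ (a,i) = complex_of_real (g i) * (P $$ (a,i) * cnj (P $$ (a,i)))"
        using a i by (simp add: Qe ac_simps)
      also have "P $$ (a,i) * cnj (P $$ (a,i)) = complex_of_real ((cmod (P $$ (a,i)))^2)"
        by (simp only: complex_norm_square)
      finally show "cnj (Q $$ (a,i)) * P $$ (a,i) = complex_of_real (g i * (cmod (P $$ (a,i)))^2)"
        by (simp only: of_real_mult)
    qed
    also have "\<dots> = complex_of_real (g i * (colnorm P i)^2)"
      unfolding colnorm_def using Pc by (simp add: sum_distrib_left sum_nonneg)
    finally show "(\<Sum>a<m. cnj ((S * V) $$ (a,i)) * (T * V) $$ (a,i)) = complex_of_real (g i * (colnorm (T * V) i)^2)"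
      unfolding P_def .
  qed
  also have "\<dots> = complex_of_real (\<Sum>i<n. g i * (colnorm (T * V) i)^2)" by simp
  finally show ?thesis using Sc sv by blast
qed

lemma pw1: assumes "0 \<le> (x::real)" shows "x powr (r - 2) * x^2 = x powr r"
proof (cases "x = 0")
  case False
  then have "x^2 = x powr 2" using assms by (simp add: powr_realpow)
  then have "x powr (r - 2) * x^2 = x powr (r - 2) * x powr 2" by simp
  also have "\<dots> = x powr r" by (simp add: powr_add[symmetric])
  finally show ?thesis .
qed simp

lemma pw2: assumes "0 \<le> (x::real)" shows "x powr (r - 2) * x = x powr (r - 1)"
proof (cases "x = 0")
  case False
  have e: "x powr 1 = x" using assms by simp
  have "x powr (r - 2) * x powr 1 = x powr (r - 2 + 1)" by (rule powr_add[symmetric])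
  also have "r - 2 + 1 = r - 1" by simp
  finally show ?thesis unfolding e .
qed simp

theorem mainTheorem1:
  fixes p :: real and q :: ereal and N :: nat
  assumes "1 \<le> p" and "p \<le> 2"
    and "q = (if p = 1 then \<infinity> else ereal (p / (p - 1)))"
    and "N \<ge> 1"
    and hyp: "\<forall>S m1 m2 w. is_block2 N S m1 m2 w \<longrightarrow>
               schatten (ereal p) S \<ge> schatten (ereal p) (compr (ereal p) N S m1 m2 w)"
  shows "\<forall>T m1 m2 w. is_block2 N T m1 m2 w \<longrightarrow>
               schatten q T \<le> schatten q (compr q N T m1 m2 w)"
proof (intro allI impI)
  fix T m1 m2 w assume bT: "is_block2 N T m1 m2 w"
  define m where "m = m1 + m2"
  define n where "n = (\<Sum>k<N. w k)"
  have dT: "dim_row T = m" "dim_col T = n" using bT unfolding is_block2_def m_def n_def by simp_all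
  have T: "T \<in> carrier_mat m n" using dT by (rule carrier_matI)
  have Tm: "T \<in> carrier_mat (m1 + m2) (\<Sum>k<N. w k)" using T unfolding m_def n_def .
  have hypS: "schatten (ereal p) (compr (ereal p) N S m1 m2 w) \<le> schatten (ereal p) S"
    if S: "S \<in> carrier_mat m n" for S
  proof -
    have "dim_row S = m1 + m2" "dim_col S = (\<Sum>k<N. w k)" using S unfolding m_def n_def by auto
    then have "is_block2 N S m1 m2 w" using bT unfolding is_block2_def by simp
    then show ?thesis using hyp by blast
  qed
  obtain V where V: "unitaryM n V" and Vd: "\<forall>i<n. \<forall>j<n. i \<noteq> j \<longrightarrow> (adj (T * V) * (T * V)) $$ (i,j) = 0"
    using svd_exists[OF T] by blast
  define \<sigma> where "\<sigma> = colnorm (T * V)"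
  have \<sigma>0: "\<forall>i<n. 0 \<le> \<sigma> i" unfolding \<sigma>_def colnorm_def by (simp add: sum_nonneg)
  have svT: "sq_sing_vals T = mset (map (\<lambda>i. complex_of_real ((\<sigma> i)^2)) [0..<n])"
    unfolding \<sigma>_def by (rule sq_sing_vals_from[OF T V Vd])
  define C where "C = schatten q (compr q N T m1 m2 w)"
  have C0: "0 \<le> C" unfolding C_def by (rule schatten_nonneg)
  show "schatten q T \<le> schatten q (compr q N T m1 m2 w)"
    unfolding C_def[symmetric]
  proof (cases "p = 1")
    case True
    then have q: "q = \<infinity>" using assms(3) by simp
    define smax where "smax = Max (insert 0 (\<sigma> ` {..<n}))"
    have sT: "schatten q T = smax" using schatten_from(2)[OF svT \<sigma>0] q unfolding smax_def by simp
    show "schatten q T \<le> C"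
    proof (cases "smax = 0")
      case True
      then show ?thesis using C0 sT by simp
    next
      case False
      have "smax \<in> insert 0 (\<sigma> ` {..<n})" unfolding smax_def by (rule Max_in) simp_all
      then obtain i0 where i0: "i0 < n" and si0: "\<sigma> i0 = smax" using False by auto
      have "0 \<le> smax" unfolding smax_def by simp
      then have smax0: "0 < smax" using False by simp
      define g where "g i = (if i = i0 then 1 / smax else 0)" for i
      have g0: "\<forall>i<n. 0 \<le> g i" using smax0 unfolding g_def by simp
      obtain S where Sc: "S \<in> carrier_mat m n"
        and fS: "frob S T = complex_of_real (\<Sum>i<n. g i * (colnorm (T * V) i)^2)"
        and svS: "sq_sing_vals S = mset (map (\<lambda>i. complex_of_real ((g i * colnorm (T * V) i)^2)) [0..<n])"
        using construct[OF T V Vd g0] by blast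
      have "(\<Sum>i<n. g i * (\<sigma> i)^2) = (\<Sum>i<n. if i = i0 then smax else 0)"
        using smax0 si0 by (intro sum.cong refl) (simp add: g_def power2_eq_square)
      also have "\<dots> = smax" using i0 by simp
      finally have fS': "frob S T = complex_of_real smax" using fS unfolding \<sigma>_def by simp
      have gs: "\<forall>i<n. 0 \<le> g i * \<sigma> i" using g0 \<sigma>0 by simp
      have "schatten (ereal 1) S = (\<Sum>i<n. (g i * \<sigma> i) powr 1) powr (1/1)"
        by (rule schatten_from(1)[OF svS[folded \<sigma>_def] gs])
      also have "(\<Sum>i<n. (g i * \<sigma> i) powr 1) = (\<Sum>i<n. if i = i0 then 1 else 0)"
        using smax0 si0 by (intro sum.cong refl) (simp add: g_def)
      also have "(\<Sum>i<n. if i = i0 then 1 else 0) = (1::real)" using i0 by simp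
      finally have sS: "schatten (ereal 1) S = 1" by simp
      have "smax = cmod (frob S T)" using fS' smax0 by simp
      also have "\<dots> \<le> schatten (ereal 1) (compr (ereal 1) N S m1 m2 w) * schatten \<infinity> (compr \<infinity> N T m1 m2 w)"
        using Sc unfolding m_def n_def by (intro block_holder[OF _ Tm] holder_1) auto
      also have "\<dots> \<le> schatten (ereal 1) S * C"
      proof -
        have h: "schatten (ereal 1) (compr (ereal 1) N S m1 m2 w) \<le> schatten (ereal 1) S"
          using hypS[OF Sc] True by simp
        have C': "C = schatten \<infinity> (compr \<infinity> N T m1 m2 w)" unfolding C_def q ..
        show ?thesis unfolding C' by (rule mult_right_mono[OF h schatten_nonneg])
      qed
      finally show ?thesis using sS sT by simp
    qed
  next
    case False
    then have p1: "1 < p" using assms(1) by simp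
    define r where "r = p / (p - 1)"
    have q: "q = ereal r" using assms(3) False unfolding r_def by simp
    have r2: "2 \<le> r" and r1: "1 < r" using p1 assms(2) unfolding r_def by (auto simp: field_simps)
    have pr: "1/p + 1/r = 1" using p1 unfolding r_def by (simp add: field_simps)
    have rp: "(r - 1) * p = r" using p1 unfolding r_def by (simp add: field_simps)
    define K where "K = (\<Sum>i<n. \<sigma> i powr r)"
    have K0: "0 \<le> K" unfolding K_def by (simp add: sum_nonneg)
    have sT: "schatten q T = K powr (1/r)" using schatten_from(1)[OF svT \<sigma>0] q unfolding K_def by simp
    define g where "g i = \<sigma> i powr (r - 2)" for i
    have g0: "\<forall>i<n. 0 \<le> g i" unfolding g_def by simp
    obtain S where Sc: "S \<in> carrier_mat m n"
      and fS: "frob S T = complex_of_real (\<Sum>i<n. g i * (colnorm (T * V) i)^2)"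
      and svS: "sq_sing_vals S = mset (map (\<lambda>i. complex_of_real ((g i * colnorm (T * V) i)^2)) [0..<n])"
      using construct[OF T V Vd g0] by blast
    have "(\<Sum>i<n. g i * (\<sigma> i)^2) = K" unfolding K_def g_def using \<sigma>0 by (intro sum.cong refl) (simp add: pw1)
    then have fS': "frob S T = complex_of_real K" using fS unfolding \<sigma>_def by simp
    have gs: "\<forall>i<n. 0 \<le> g i * \<sigma> i" using g0 \<sigma>0 by simp
    have "schatten (ereal p) S = (\<Sum>i<n. (g i * \<sigma> i) powr p) powr (1/p)"
      by (rule schatten_from(1)[OF svS[folded \<sigma>_def] gs])
    also have "(\<Sum>i<n. (g i * \<sigma> i) powr p) = K"
      unfolding K_def g_def using \<sigma>0 rp by (intro sum.cong refl) (simp add: pw2 powr_powr)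
    finally have sS: "schatten (ereal p) S = K powr (1/p)" .
    have "K = cmod (frob S T)" using fS' K0 by simp
    also have "\<dots> \<le> schatten (ereal p) (compr (ereal p) N S m1 m2 w) * schatten (ereal (p / (p - 1))) (compr (ereal (p / (p - 1))) N T m1 m2 w)"
      using Sc p1 assms(2) unfolding m_def n_def by (intro block_holder[OF _ Tm] holder_p) auto
    also have "\<dots> \<le> schatten (ereal p) S * C"
    proof -
      have C': "C = schatten (ereal (p / (p - 1))) (compr (ereal (p / (p - 1))) N T m1 m2 w)"
        unfolding C_def q r_def ..
      show ?thesis unfolding C' by (rule mult_right_mono[OF hypS[OF Sc] schatten_nonneg])
    qed
    finally have KC: "K \<le> K powr (1/p) * C" using sS by simp
    show "schatten q T \<le> C"
    proof (cases "K = 0")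
      case True
      then show ?thesis using sT C0 by simp
    next
      case False
      then have Kp: "0 < K" using K0 by simp
      have "K powr (1/p) * K powr (1/r) = K" using pr Kp by (simp add: powr_add[symmetric])
      then have "K powr (1/p) * K powr (1/r) \<le> K powr (1/p) * C" using KC by simp
      then have "K powr (1/r) \<le> C" using Kp by (simp add: mult_le_cancel_left_pos)
      then show ?thesis using sT by simp
    qed
  qed
qed

end
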